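(* Let $W$ be a $DNNF$-compilation of a weighted base, i.e. $W=\{\langle\alpha,+\infty\rangle\}\cup\{\langle{\it holds}_i,k_i\rangle \mid i\in I\}$ where the $k_i$ are finite positive weights, and suppose the single hard constraint $\alpha$ is a smooth $DNNF$ sentence. Define $k$ and $min$ on the nodes of $\alpha$ inductively: $k(true)=0$, $k(false)=+\infty$; for a literal $\ell$, $k(\ell)=k_i$ if $\ell=\neg{\it holds}_i$ with $\langle{\it holds}_i,k_i\rangle\in W$, and $k(\ell)=0$ otherwise; $k(\bigvee_j\alpha_j)=\min_j k(\alpha_j)$; $k(\bigwedge_j\alpha_j)=\sum_j k(\alpha_j)$. Further $min(\beta)=\beta$ for a literal or constant $\beta$; $min(\beta=\bigvee_j\beta_j)=\bigvee_{j:\,k(\beta_j)=k(\beta)} min(\beta_j)$; $min(\bigwedge_j\beta_j)=\bigwedge_j min(\beta_j)$. Then $min(\alpha)$ is a smooth $DNNF$ sentence and is a minimization of $W$, i.e. its models are exactly $min_W(\Omega)$.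
   Context: Worlds are $\omega\in\Omega=2^{PS}$ for a finite symbol set $PS$. For a weighted base $W$ (finite set of pairs $\langle\phi,k\rangle$, $k$ a positive integer or $+\infty$), $K_W(\omega)=\sum_{\langle\phi_i,k_i\rangle\in W,\ \omega\models\neg\phi_i}k_i$ and $min_W(\Omega)=\{\omega\in\Omega \mid K_W(\omega)\le K_W(\omega')\ \forall\omega'\in\Omega\}$. A minimization of $W$ is a formula whose set of models is $min_W(\Omega)$. A $DNNF$ sentence is a rooted DAG whose leaves are labeled $true$, $false$, $x$ or $\neg x$ ($x\in PS$), whose internal nodes are labeled $\wedge$ or $\vee$ with arbitrarily many children, and such that the children of every $\wedge$-node mention pairwise disjoint sets of variables (decomposability). It is smooth if for each $\vee$-node all children mention the same set of variables. A $DNNF$-compilation of a weighted base is obtained by taking its normal form (each soft formula $\langle\phi_i,k_i\rangle$ replaced by hard $\langle{\it holds}_i\Rightarrow\phi_i,+\infty\rangle$ and soft $\langle{\it holds}_i,k_i\rangle$ with fresh ${\it holds}_i$), conjoining all hard constraints into one, and replacing it by an equivalent $DNNF$ sentence, keeping the soft constraints $\langle{\it holds}_i,k_i\rangle$.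
   Formalization: The hard constraint alpha is also assumed satisfiable and to mention every symbol $holds_i$ with $i \in I$. The statement above fails without it. *)

theory Defs
  imports Main "HOL-Library.Extended_Nat"
begin

datatype 'v nnf = TT | FF | Pos 'v | Neg 'v | Or "'v nnf list" | And "'v nnf list"

fun sat :: "('v \<Rightarrow> bool) \<Rightarrow> 'v nnf \<Rightarrow> bool" where
  "sat w TT = True"
| "sat w FF = False"
| "sat w (Pos x) = w x"
| "sat w (Neg x) = (\<not> w x)"
| "sat w (Or xs) = (\<exists>b\<in>set xs. sat w b)"
| "sat w (And xs) = (\<forall>b\<in>set xs. sat w b)"

fun vars :: "'v nnf \<Rightarrow> 'v set" where
  "vars TT = {}"
| "vars FF = {}"
| "vars (Pos x) = {x}"
| "vars (Neg x) = {x}"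
| "vars (Or xs) = (\<Union>b\<in>set xs. vars b)"
| "vars (And xs) = (\<Union>b\<in>set xs. vars b)"

fun decomposable :: "'v nnf \<Rightarrow> bool" where
  "decomposable (Or xs) = (\<forall>b\<in>set xs. decomposable b)"
| "decomposable (And xs) = ((\<forall>b\<in>set xs. decomposable b) \<and>
     (\<forall>i j. i < length xs \<longrightarrow> j < length xs \<longrightarrow> i \<noteq> j \<longrightarrow> vars (xs!i) \<inter> vars (xs!j) = {}))"
| "decomposable _ = True"

fun smooth :: "'v nnf \<Rightarrow> bool" where
  "smooth (Or xs) = ((\<forall>b\<in>set xs. smooth b) \<and> (\<forall>a\<in>set xs. \<forall>b\<in>set xs. vars a = vars b))"
| "smooth (And xs) = (\<forall>b\<in>set xs. smooth b)"
| "smooth _ = True"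

(* Soft constraints <holds_i, k_i>, i in I, with holds_i = h i a variable.
   kval = the node function k of the paper (values in enat, \<infinity> = +infinity). *)
fun kval :: "'i set \<Rightarrow> ('i \<Rightarrow> 'v) \<Rightarrow> ('i \<Rightarrow> nat) \<Rightarrow> 'v nnf \<Rightarrow> enat" where
  "kval I h k TT = 0"
| "kval I h k FF = \<infinity>"
| "kval I h k (Pos x) = 0"
| "kval I h k (Neg x) = (if x \<in> h ` I then enat (k (the_inv_into I h x)) else 0)"
| "kval I h k (Or xs) = Min (insert \<infinity> (set (map (kval I h k) xs)))"
| "kval I h k (And xs) = sum_list (map (kval I h k) xs)"

function minf :: "'i set \<Rightarrow> ('i \<Rightarrow> 'v) \<Rightarrow> ('i \<Rightarrow> nat) \<Rightarrow> 'v nnf \<Rightarrow> 'v nnf" where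
  "minf I h k TT = TT"
| "minf I h k FF = FF"
| "minf I h k (Pos x) = Pos x"
| "minf I h k (Neg x) = Neg x"
| "minf I h k (Or xs) =
     Or (map (minf I h k) (filter (\<lambda>b. kval I h k b = kval I h k (Or xs)) xs))"
| "minf I h k (And xs) = And (map (minf I h k) xs)"
  by pat_completeness auto
termination
  by (relation "measure (\<lambda>(_,_,_,b). size b)")
     (auto simp: size_list_estimation' less_Suc_eq_le)

definition KW :: "'v nnf \<Rightarrow> 'i set \<Rightarrow> ('i \<Rightarrow> 'v) \<Rightarrow> ('i \<Rightarrow> nat) \<Rightarrow> ('v \<Rightarrow> bool) \<Rightarrow> enat" where
  "KW \<alpha> I h k w = (if sat w \<alpha> then 0 else \<infinity>) + (\<Sum>i\<in>{i\<in>I. \<not> w (h i)}. enat (k i))"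

definition minW :: "'v nnf \<Rightarrow> 'i set \<Rightarrow> ('i \<Rightarrow> 'v) \<Rightarrow> ('i \<Rightarrow> nat) \<Rightarrow> ('v \<Rightarrow> bool) set" where
  "minW \<alpha> I h k = {w. \<forall>w'. KW \<alpha> I h k w \<le> KW \<alpha> I h k w'}"

end

theory Submission
  imports Defs
begin

definition cost :: "'i set \<Rightarrow> ('i \<Rightarrow> 'v) \<Rightarrow> ('i \<Rightarrow> nat) \<Rightarrow> 'v set \<Rightarrow> ('v \<Rightarrow> bool) \<Rightarrow> nat" where
  "cost I h k V w = sum k {i\<in>I. h i \<in> V \<and> \<not> w (h i)}"

lemma sat_local: "(\<forall>x\<in>vars b. w x = w' x) \<Longrightarrow> sat w b = sat w' b"
  by (induction b) auto

lemma cost_local: "(\<forall>x\<in>V. w x = w' x) \<Longrightarrow> cost I h k V w = cost I h k V w'"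
  unfolding cost_def by (rule arg_cong[where f="sum k"]) auto

lemma cost_union: "finite I \<Longrightarrow> A \<inter> B = {} \<Longrightarrow> cost I h k (A \<union> B) w = cost I h k A w + cost I h k B w"
  unfolding cost_def
  by (subst sum.union_disjoint[symmetric]) (auto intro: arg_cong[where f="sum k"])

lemma cost_list:
  assumes "finite I"
  shows "(\<forall>i j. i < length xs \<longrightarrow> j < length xs \<longrightarrow> i \<noteq> j \<longrightarrow> vars (xs!i) \<inter> vars (xs!j) = {})
    \<Longrightarrow> sum_list (map (\<lambda>b. cost I h k (vars b) w) xs) = cost I h k (\<Union>b\<in>set xs. vars b) w"
proof (induction xs)
  case Nil
  then show ?case by (simp add: cost_def)
next
  case (Cons a xs)
  have d: "\<forall>i j. i < length xs \<longrightarrow> j < length xs \<longrightarrow> i \<noteq> j \<longrightarrow> vars (xs!i) \<inter> vars (xs!j) = {}"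
  proof (intro allI impI)
    fix i j assume "i < length xs" "j < length xs" "i \<noteq> j"
    then show "vars (xs!i) \<inter> vars (xs!j) = {}" using Cons.prems[rule_format, of "Suc i" "Suc j"] by simp
  qed
  have "vars a \<inter> (\<Union>b\<in>set xs. vars b) = {}"
  proof -
    { fix b assume "b \<in> set xs"
      then obtain j where "j < length xs" "xs!j = b" by (auto simp: in_set_conv_nth)
      then have "vars a \<inter> vars b = {}" using Cons.prems[rule_format, of 0 "Suc j"] by simp }
    then show ?thesis by blast
  qed
  then show ?case using Cons.IH[OF d] cost_union[OF assms, of "vars a" "\<Union>b\<in>set xs. vars b" h k w] by simp
qed

lemma distinct_elems_disj:
  assumes "\<forall>i j. i < length xs \<longrightarrow> j < length xs \<longrightarrow> i \<noteq> j \<longrightarrow> vars (xs!i) \<inter> vars (xs!j) = {}"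
    and "b \<in> set xs" "b' \<in> set xs" "b \<noteq> b'"
  shows "vars b \<inter> vars b' = {}"
proof -
  obtain i where "i < length xs" "xs!i = b" using assms(2) by (auto simp: in_set_conv_nth)
  moreover obtain j where "j < length xs" "xs!j = b'" using assms(3) by (auto simp: in_set_conv_nth)
  ultimately show ?thesis using assms(1,4) by auto
qed

lemma sum_list_enat: "sum_list (map (\<lambda>b. enat (f b)) xs) = enat (sum_list (map f xs))"
  by (induction xs) (auto simp: zero_enat_def)

lemma sum_enat': "(\<Sum>i\<in>A. enat (f i)) = enat (sum f A)"
  by (induction A rule: infinite_finite_induct) (auto simp: zero_enat_def)

lemma sum_list_inf: "sum_list (map f xs) \<noteq> (\<infinity>::enat) \<Longrightarrow> b \<in> set xs \<Longrightarrow> f b \<noteq> \<infinity>"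
  by (induction xs) (auto simp: plus_eq_infty_iff_enat)

lemma sum_list_eq_each:
  fixes f g :: "'a \<Rightarrow> enat"
  shows "\<forall>x\<in>set xs. f x \<le> g x \<Longrightarrow> \<forall>x\<in>set xs. g x \<noteq> \<infinity> \<Longrightarrow>
    sum_list (map f xs) = sum_list (map g xs) \<Longrightarrow> \<forall>x\<in>set xs. f x = g x"
proof (induction xs)
  case Nil then show ?case by simp
next
  case (Cons a xs)
  have le: "sum_list (map f xs) \<le> sum_list (map g xs)"
    using Cons.prems(1) by (intro sum_list_mono) auto
  have fin: "sum_list (map g xs) \<noteq> \<infinity>" using Cons.prems(2)
    by (induction xs) auto
  obtain ga where ga: "g a = enat ga" using Cons.prems(2) by (cases "g a") auto
  obtain sg where sg: "sum_list (map g xs) = enat sg" using fin by (cases "sum_list (map g xs)") auto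
  obtain fa where fa: "f a = enat fa" using Cons.prems(1) ga by (cases "f a") auto
  obtain sf where sf: "sum_list (map f xs) = enat sf" using le sg by (cases "sum_list (map f xs)") auto
  have "fa \<le> ga" using Cons.prems(1) fa ga by auto
  moreover have "sf \<le> sg" using le sf sg by auto
  moreover have "fa + sf = ga + sg" using Cons.prems(3) fa ga sf sg by simp
  ultimately have "fa = ga" "sf = sg" by auto
  then have fg: "f a = g a" "sum_list (map f xs) = sum_list (map g xs)" using fa ga sf sg by auto
  have p1: "\<forall>x\<in>set xs. f x \<le> g x" using Cons.prems(1) by simp
  have p2: "\<forall>x\<in>set xs. g x \<noteq> \<infinity>" using Cons.prems(2) by simp
  have "\<forall>x\<in>set xs. f x = g x" using Cons.IH[OF p1 p2 fg(2)] .
  then show ?case using fg(1) by simp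
qed

lemma smooth_Or_vars:
  assumes "smooth (Or xs)" "b \<in> set xs"
  shows "vars b = vars (Or xs)"
proof -
  have s: "\<forall>a\<in>set xs. \<forall>c\<in>set xs. vars a = vars c" using assms(1) unfolding smooth.simps by (elim conjE)
  have all: "vars c = vars b" if c: "c \<in> set xs" for c using bspec[OF bspec[OF s c] assms(2)] .
  have "(\<Union>c\<in>set xs. vars c) = (\<Union>c\<in>set xs. vars b)" by (rule SUP_cong[OF refl all])
  also have "\<dots> = vars b" using assms(2) by blast
  finally show ?thesis by (simp only: vars.simps)
qed

context
  fixes I :: "'i set" and h :: "'i \<Rightarrow> 'v" and k :: "'i \<Rightarrow> nat"
  assumes finI: "finite I" and injh: "inj_on h I"
begin

lemma main:
  "decomposable \<beta> \<Longrightarrow> smooth \<beta> \<Longrightarrow>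
    (\<forall>w. sat w \<beta> \<longrightarrow> kval I h k \<beta> \<le> enat (cost I h k (vars \<beta>) w)) \<and>
    (kval I h k \<beta> \<noteq> \<infinity> \<longrightarrow> (\<exists>w. sat w \<beta> \<and> enat (cost I h k (vars \<beta>) w) = kval I h k \<beta>)) \<and>
    (\<forall>w. sat w (minf I h k \<beta>) \<longleftrightarrow> sat w \<beta> \<and> enat (cost I h k (vars \<beta>) w) = kval I h k \<beta>)"
proof (induction \<beta>)
  case TT
  then show ?case by (simp add: cost_def zero_enat_def)
next
  case FF
  then show ?case by simp
next
  case (Pos x)
  have P0: "\<And>w. w x \<Longrightarrow> cost I h k {x} w = 0"
  proof -
    fix w :: "'v \<Rightarrow> bool" assume "w x"
    then have e: "{i\<in>I. h i \<in> {x} \<and> \<not> w (h i)} = {}" by auto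
    show "cost I h k {x} w = 0" unfolding cost_def e by simp
  qed
  show ?case
    apply (intro conjI allI impI)
      apply simp
     apply (rule exI[of _ "\<lambda>_. True"])
     apply (simp add: P0 zero_enat_def)
    apply (simp add: zero_enat_def)
    using P0 by blast
next
  case (Neg x)
  have c: "cost I h k {x} w = (if x \<in> h ` I then k (the_inv_into I h x) else 0)" if "\<not> w x" for w
  proof (cases "x \<in> h ` I")
    case True
    then obtain i where i: "i \<in> I" "x = h i" by auto
    have e: "{j\<in>I. h j \<in> {x} \<and> \<not> w (h j)} = {i}" using i that injh by (auto simp: inj_on_def)
    show ?thesis unfolding cost_def e using True i the_inv_into_f_f[OF injh i(1)] by simp
  next
    case False
    then have e: "{j\<in>I. h j \<in> {x} \<and> \<not> w (h j)} = {}" by auto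
    show ?thesis unfolding cost_def e using False by simp
  qed
  show ?case
    apply (intro conjI allI impI)
    using c apply (simp add: zero_enat_def)
     apply (rule exI[of _ "\<lambda>_. False"]) using c apply (simp add: zero_enat_def)
    using c by (auto simp: zero_enat_def)
next
  case (Or xs)
  let ?K = "kval I h k"
  have IH: "\<And>b. b \<in> set xs \<Longrightarrow>
    (\<forall>w. sat w b \<longrightarrow> ?K b \<le> enat (cost I h k (vars b) w)) \<and>
    (?K b \<noteq> \<infinity> \<longrightarrow> (\<exists>w. sat w b \<and> enat (cost I h k (vars b) w) = ?K b)) \<and>
    (\<forall>w. sat w (minf I h k b) \<longleftrightarrow> sat w b \<and> enat (cost I h k (vars b) w) = ?K b)"
  proof -
    fix b assume b: "b \<in> set xs"
    have db: "decomposable b" using Or.prems(1) b unfolding decomposable.simps by blast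
    have sb: "smooth b" using Or.prems(2) b unfolding smooth.simps by blast
    show "?thesis b" using Or.IH[OF b db sb] .
  qed
  have vb: "\<And>b. b \<in> set xs \<Longrightarrow> vars b = vars (Or xs)" using Or.prems(2) by (rule smooth_Or_vars)
  have kOr: "?K (Or xs) = Min (insert \<infinity> (?K ` set xs))" by simp
  have le: "\<And>b. b \<in> set xs \<Longrightarrow> ?K (Or xs) \<le> ?K b" unfolding kOr by (rule Min_le) auto
  have att: "?K (Or xs) \<noteq> \<infinity> \<Longrightarrow> \<exists>b\<in>set xs. ?K b = ?K (Or xs)"
  proof -
    assume "?K (Or xs) \<noteq> \<infinity>"
    moreover have "?K (Or xs) \<in> insert \<infinity> (?K ` set xs)" unfolding kOr by (rule Min_in) auto
    ultimately show ?thesis by auto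
  qed
  show ?case
  proof (intro conjI allI impI)
    fix w assume "sat w (Or xs)"
    then obtain b where b: "b \<in> set xs" "sat w b" by auto
    then show "?K (Or xs) \<le> enat (cost I h k (vars (Or xs)) w)"
      using IH[OF b(1)] le[OF b(1)] vb[OF b(1)] order_trans by metis
  next
    assume "?K (Or xs) \<noteq> \<infinity>"
    then obtain b where b: "b \<in> set xs" "?K b = ?K (Or xs)" using att by auto
    then have "?K b \<noteq> \<infinity>" using \<open>?K (Or xs) \<noteq> \<infinity>\<close> by simp
    then obtain w where "sat w b" "enat (cost I h k (vars b) w) = ?K b" using IH[OF b(1)] by auto
    then show "\<exists>w. sat w (Or xs) \<and> enat (cost I h k (vars (Or xs)) w) = ?K (Or xs)"
      using b vb[OF b(1)] by auto
  next
    fix w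
    show "sat w (minf I h k (Or xs)) \<longleftrightarrow> sat w (Or xs) \<and> enat (cost I h k (vars (Or xs)) w) = ?K (Or xs)"
    proof
      assume "sat w (minf I h k (Or xs))"
      then obtain b where b: "b \<in> set xs" "?K b = ?K (Or xs)" "sat w (minf I h k b)"
        by (auto simp del: kval.simps)
      then show "sat w (Or xs) \<and> enat (cost I h k (vars (Or xs)) w) = ?K (Or xs)"
        using IH[OF b(1)] vb[OF b(1)] by auto
    next
      assume a: "sat w (Or xs) \<and> enat (cost I h k (vars (Or xs)) w) = ?K (Or xs)"
      then obtain b where b: "b \<in> set xs" "sat w b" by auto
      have "?K b \<le> enat (cost I h k (vars b) w)" using IH[OF b(1)] b(2) by auto
      then have "?K b = ?K (Or xs)" using le[OF b(1)] a vb[OF b(1)] by (metis antisym)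
      moreover have "sat w (minf I h k b)" using IH[OF b(1)] b(2) a vb[OF b(1)] calculation by auto
      ultimately show "sat w (minf I h k (Or xs))" using b(1) by (auto simp del: kval.simps)
    qed
  qed
next
  case (And xs)
  let ?K = "kval I h k"
  let ?c = "\<lambda>b w. cost I h k (vars b) w"
  have IH: "\<And>b. b \<in> set xs \<Longrightarrow>
    (\<forall>w. sat w b \<longrightarrow> ?K b \<le> enat (cost I h k (vars b) w)) \<and>
    (?K b \<noteq> \<infinity> \<longrightarrow> (\<exists>w. sat w b \<and> enat (cost I h k (vars b) w) = ?K b)) \<and>
    (\<forall>w. sat w (minf I h k b) \<longleftrightarrow> sat w b \<and> enat (cost I h k (vars b) w) = ?K b)"
  proof -
    fix b assume b: "b \<in> set xs"
    have db: "decomposable b" using And.prems(1) b unfolding decomposable.simps by blast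
    have sb: "smooth b" using And.prems(2) b unfolding smooth.simps by blast
    show "?thesis b" using And.IH[OF b db sb] .
  qed
  have disj: "\<forall>i j. i < length xs \<longrightarrow> j < length xs \<longrightarrow> i \<noteq> j \<longrightarrow> vars (xs!i) \<inter> vars (xs!j) = {}"
    using And.prems(1) by simp
  have cAnd: "enat (cost I h k (vars (And xs)) w) = sum_list (map (\<lambda>b. enat (?c b w)) xs)" for w
    using cost_list[OF finI disj] by (simp add: sum_list_enat)
  have kAnd: "?K (And xs) = sum_list (map ?K xs)" by simp
  have A: "?K (And xs) \<le> enat (cost I h k (vars (And xs)) w)" if "sat w (And xs)" for w
    unfolding kAnd cAnd using that IH by (intro sum_list_mono) auto
  show ?case
  proof (intro conjI allI impI)
    fix w assume "sat w (And xs)" then show "?K (And xs) \<le> enat (cost I h k (vars (And xs)) w)" by (rule A)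
  next
    assume fin: "?K (And xs) \<noteq> \<infinity>"
    have "\<forall>b\<in>set xs. \<exists>w. sat w b \<and> enat (?c b w) = ?K b"
      using IH sum_list_inf[OF fin[unfolded kAnd]] by blast
    then obtain W where W: "\<And>b. b \<in> set xs \<Longrightarrow> sat (W b) b \<and> enat (?c b (W b)) = ?K b" by metis
    define w where "w = (\<lambda>x. W (SOME b. b \<in> set xs \<and> x \<in> vars b) x)"
    have agree: "\<forall>x\<in>vars b. w x = W b x" if b: "b \<in> set xs" for b
    proof
      fix x assume x: "x \<in> vars b"
      have "\<exists>b. b \<in> set xs \<and> x \<in> vars b" using b x by blast
      then have s: "(SOME b. b \<in> set xs \<and> x \<in> vars b) \<in> set xs \<and> x \<in> vars (SOME b. b \<in> set xs \<and> x \<in> vars b)"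
        by (rule someI_ex)
      have "(SOME b. b \<in> set xs \<and> x \<in> vars b) = b"
        using distinct_elems_disj[OF disj b] s x by blast
      then show "w x = W b x" unfolding w_def by simp
    qed
    have sw: "sat w b" if b: "b \<in> set xs" for b
    proof -
      have "sat (W b) b" using W[OF b] by blast
      then show ?thesis using sat_local[OF agree[OF b]] by simp
    qed
    have cw: "enat (?c b w) = ?K b" if b: "b \<in> set xs" for b
    proof -
      have "?c b w = ?c b (W b)" using cost_local[OF agree[OF b]] .
      then show ?thesis using W[OF b] by simp
    qed
    have "enat (cost I h k (vars (And xs)) w) = ?K (And xs)"
      unfolding cAnd kAnd by (rule arg_cong[where f=sum_list], rule map_cong[OF refl cw])
    then show "\<exists>w. sat w (And xs) \<and> enat (cost I h k (vars (And xs)) w) = ?K (And xs)"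
      using sw by auto
  next
    fix w
    show "sat w (minf I h k (And xs)) \<longleftrightarrow> sat w (And xs) \<and> enat (cost I h k (vars (And xs)) w) = ?K (And xs)"
    proof
      assume "sat w (minf I h k (And xs))"
      then have eq: "\<forall>b\<in>set xs. sat w b \<and> enat (?c b w) = ?K b" using IH by auto
      have "sat w (And xs)" using eq by simp
      moreover have "enat (cost I h k (vars (And xs)) w) = ?K (And xs)"
        unfolding cAnd kAnd by (rule arg_cong[where f=sum_list], rule map_cong[OF refl]) (use eq in blast)
      ultimately show "sat w (And xs) \<and> enat (cost I h k (vars (And xs)) w) = ?K (And xs)" ..
    next
      assume a: "sat w (And xs) \<and> enat (cost I h k (vars (And xs)) w) = ?K (And xs)"
      then have s: "\<forall>b\<in>set xs. sat w b" by simp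
      have "\<forall>b\<in>set xs. ?K b = enat (?c b w)"
        apply (rule sum_list_eq_each)
        using IH s apply blast
         apply simp
        using a unfolding cAnd kAnd by simp
      then show "sat w (minf I h k (And xs))" using IH s by auto
    qed
  qed
qed

end

lemma vars_minf_sub: "vars (minf I h k b) \<subseteq> vars b"
  by (induction I h k b rule: minf.induct) (auto simp del: kval.simps)

lemma decomp_minf: "decomposable b \<Longrightarrow> decomposable (minf I h k b)"
proof (induction I h k b rule: minf.induct)
  case (5 I h k xs)
  then show ?case by (auto simp del: kval.simps)
next
  case (6 I h k xs)
  show ?case
  proof -
    have "\<forall>b\<in>set xs. decomposable (minf I h k b)" using 6 by auto
    moreover have "\<forall>i j. i < length xs \<longrightarrow> j < length xs \<longrightarrow> i \<noteq> j \<longrightarrow>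
        vars (minf I h k (xs!i)) \<inter> vars (minf I h k (xs!j)) = {}"
      using 6(2) vars_minf_sub[of I h k] by simp blast
    ultimately show ?thesis by simp
  qed
qed auto

lemma smooth_minf: "smooth b \<Longrightarrow> smooth (minf I h k b) \<and> vars (minf I h k b) = vars b"
proof (induction I h k b rule: minf.induct)
  case (5 I h k xs)
  let ?K = "kval I h k"
  let ?f = "filter (\<lambda>b. ?K b = ?K (Or xs)) xs"
  have IH: "smooth (minf I h k b) \<and> vars (minf I h k b) = vars b" if b: "b \<in> set ?f" for b
  proof -
    have sb: "smooth b" using 5(2) b by simp
    show ?thesis using 5(1)[OF b sb] .
  qed
  have vb: "\<And>b. b \<in> set xs \<Longrightarrow> vars b = vars (Or xs)" using 5(2) by (rule smooth_Or_vars)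
  have ne: "xs \<noteq> [] \<Longrightarrow> set ?f \<noteq> {}"
  proof -
    assume "xs \<noteq> []"
    have kOr: "?K (Or xs) = Min (insert \<infinity> (?K ` set xs))" by simp
    have mem: "?K (Or xs) \<in> insert \<infinity> (?K ` set xs)" unfolding kOr by (rule Min_in) auto
    obtain b where b: "b \<in> set xs" using \<open>xs \<noteq> []\<close> by (cases xs) auto
    have Kle: "?K (Or xs) \<le> ?K b" unfolding kOr using b by (intro Min_le) auto
    have "?K (Or xs) = \<infinity> \<or> (\<exists>b'\<in>set xs. ?K (Or xs) = ?K b')" using mem by (simp only: insert_iff image_iff)
    then have "\<exists>b'\<in>set xs. ?K b' = ?K (Or xs)"
    proof (elim disjE)
      assume inf: "?K (Or xs) = \<infinity>"
      have "?K b = ?K (Or xs)" using Kle unfolding inf by (metis order_antisym enat_ord_code(3))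
      then show ?thesis using b by blast
    next
      assume "\<exists>b'\<in>set xs. ?K (Or xs) = ?K b'"
      then show ?thesis by (metis)
    qed
    then show ?thesis unfolding set_filter by blast
  qed
  have "vars (minf I h k (Or xs)) = vars (Or xs)"
  proof (cases "xs = []")
    case True then show ?thesis by simp
  next
    case False
    obtain b0 where b0: "b0 \<in> set ?f" using ne[OF False] by (metis all_not_in_conv)
    have "vars (minf I h k (Or xs)) = (\<Union>b\<in>set ?f. vars (minf I h k b))"
      by (simp del: kval.simps)
    also have "\<dots> = (\<Union>b\<in>set ?f. vars (Or xs))"
    proof (rule SUP_cong[OF refl])
      fix b assume b: "b \<in> set ?f"
      then have b': "b \<in> set xs" by (simp del: kval.simps)
      show "vars (minf I h k b) = vars (Or xs)" using trans[OF conjunct2[OF IH[OF b]] vb[OF b']] .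
    qed
    also have "\<dots> = vars (Or xs)" using b0 by blast
    finally show ?thesis .
  qed
  moreover have "smooth (minf I h k (Or xs))"
  proof -
    have vm: "vars c = vars (Or xs)" "smooth c" if c: "c \<in> set (map (minf I h k) ?f)" for c
    proof -
      obtain b where b: "b \<in> set ?f" and cb: "c = minf I h k b" using c by auto
      then have b': "b \<in> set xs" by (simp del: kval.simps)
      show "vars c = vars (Or xs)" unfolding cb using trans[OF conjunct2[OF IH[OF b]] vb[OF b']] .
      show "smooth c" unfolding cb using conjunct1[OF IH[OF b]] .
    qed
    have "smooth (Or (map (minf I h k) ?f))" unfolding smooth.simps
    proof (intro conjI ballI)
      fix c assume "c \<in> set (map (minf I h k) ?f)" then show "smooth c" by (rule vm)
    next
      fix a c assume "a \<in> set (map (minf I h k) ?f)" "c \<in> set (map (minf I h k) ?f)"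
      then show "vars a = vars c" using vm by metis
    qed
    then show ?thesis by (simp only: minf.simps)
  qed
  ultimately show ?case by blast
next
  case (6 I h k xs)
  then show ?case by auto
qed auto

theorem proposition4p1:
  fixes \<alpha> :: "'v::finite nnf" and I :: "'i set" and h :: "'i \<Rightarrow> 'v" and k :: "'i \<Rightarrow> nat"
  assumes "finite I"
    and "inj_on h I"
    and "\<forall>i\<in>I. k i > 0"
    and "decomposable \<alpha>" and "smooth \<alpha>"
    and "h ` I \<subseteq> vars \<alpha>"
    and "\<exists>w. sat w \<alpha>"
  shows "decomposable (minf I h k \<alpha>) \<and> smooth (minf I h k \<alpha>)
         \<and> {w. sat w (minf I h k \<alpha>)} = minW \<alpha> I h k"
proof -
  note M = main[OF assms(1,2,4,5)]
  have cKW: "(\<Sum>i\<in>{i\<in>I. \<not> w (h i)}. enat (k i)) = enat (cost I h k (vars \<alpha>) w)" for w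
  proof -
    have "{i\<in>I. \<not> w (h i)} = {i\<in>I. h i \<in> vars \<alpha> \<and> \<not> w (h i)}" using assms(6) by auto
    then show ?thesis unfolding cost_def by (simp add: sum_enat')
  qed
  have KW: "KW \<alpha> I h k w = (if sat w \<alpha> then 0 else \<infinity>) + enat (cost I h k (vars \<alpha>) w)" for w
    unfolding KW_def cKW ..
  obtain w0 where w0: "sat w0 \<alpha>" using assms(7) by blast
  have fin: "kval I h k \<alpha> \<noteq> \<infinity>" using M w0 by (metis enat_ord_simps(5) enat_ord_simps(2) order_less_le_trans infinity_ileE)
  then obtain w1 where w1: "sat w1 \<alpha>" "enat (cost I h k (vars \<alpha>) w1) = kval I h k \<alpha>" using M by blast
  have "{w. sat w (minf I h k \<alpha>)} = minW \<alpha> I h k"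
  proof (intro set_eqI iffI)
    fix w assume "w \<in> {w. sat w (minf I h k \<alpha>)}"
    then have a: "sat w \<alpha>" "enat (cost I h k (vars \<alpha>) w) = kval I h k \<alpha>" using M by auto
    show "w \<in> minW \<alpha> I h k" unfolding minW_def
    proof (intro CollectI allI)
      fix w'
      show "KW \<alpha> I h k w \<le> KW \<alpha> I h k w'"
      proof (cases "sat w' \<alpha>")
        case True
        then show ?thesis using a M unfolding KW by simp
      next
        case False
        then show ?thesis unfolding KW by simp
      qed
    qed
  next
    fix w assume "w \<in> minW \<alpha> I h k"
    then have le: "KW \<alpha> I h k w \<le> KW \<alpha> I h k w1" unfolding minW_def by auto
    have s: "sat w \<alpha>"
    proof (rule ccontr)
      assume "\<not> sat w \<alpha>"
      then show False using le w1 fin unfolding KW by simp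
    qed
    then have "enat (cost I h k (vars \<alpha>) w) \<le> kval I h k \<alpha>" using le w1 unfolding KW by simp
    moreover have "kval I h k \<alpha> \<le> enat (cost I h k (vars \<alpha>) w)" using M s by blast
    ultimately have eq: "enat (cost I h k (vars \<alpha>) w) = kval I h k \<alpha>" by (rule antisym)
    have "sat w (minf I h k \<alpha>)" using M s eq by blast
    then show "w \<in> {w. sat w (minf I h k \<alpha>)}" by simp
  qed
  then show ?thesis using decomp_minf[OF assms(4)] smooth_minf[OF assms(5)] by blast
qed

end
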